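(* Let $r\ge2$, $(\mathbb{X},\mathcal{X})$ a Polish space, $G_0$ a probability measure on $\mathbb{X}^r$ with marginals $G_{0i}$, and $0\le l<1$. Let $G_i=\sum_{k\ge1}W_{ik}\delta_{\tilde\varphi_{ik}}$, $i=1,\dots,r$, where $(\tilde\varphi_{1k},\dots,\tilde\varphi_{rk})_{k\ge1}$ are i.i.d. with law $G_0$, independent of the weights, $W_{ik}=S_{ik}\prod_{j<k}(1-S_{ij})$, and the vectors $S_k=(S_{1k},\dots,S_{rk})$, $k\ge1$, are independent. (a) Suppose $\alpha_1,\alpha_2>0$ and $(S_{1k},\dots,S_{rk})=(V_{0k}V_{1k},V_{0k}V_{2k},\dots,V_{0k}V_{rk})$ with $V_{0k},\dots,V_{rk}$ independent, $V_{0k}\sim Beta(1-l+\alpha_1,\alpha_2+lk)$ and $V_{ik}\sim Beta(1-l,\alpha_1)$ for $i=1,\dots,r$. Then $G_i$ is a Poisson--Dirichlet process $PD(\alpha_1+\alpha_2,l,G_{0i})$ for every $i=1,\dots,r$. (b) Suppose $\alpha_1,\dots,\alpha_r>0$ and $(S_{1k},S_{2k},\dots,S_{rk})=(V_{0k}V_{1k}\cdots V_{r-1,k},\,V_{0k}V_{1k}\cdots V_{r-2,k},\,\dots,\,V_{0k})$, i.e. $S_{ik}=V_{0k}V_{1k}\cdots V_{r-i,k}$, with $V_{0k},\dots,V_{r-1,k}$ independent, $V_{0k}\sim Beta(1-l,\alpha_1+lk)$ and $V_{jk}\sim Beta(1+\alpha_1+\dots+\alpha_j+l(k-1),\alpha_{j+1})$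 for $j=1,\dots,r-1$. Then $G_i$ is a $PD(\alpha_1+\dots+\alpha_{r-i+1},l,G_{0i})$ for every $i=1,\dots,r$.
   Context: For $0\le l<1$, $\alpha>-l$ and a probability measure $H$ on $\mathbb{X}$, the Poisson--Dirichlet process $PD(\alpha,l,H)$ is the law of $\sum_{k\ge1}W_k\delta_{\xi_k}$, where $(\xi_k)$ are i.i.d. with law $H$, independent of $(W_k)$, and $W_k=S_k\prod_{j<k}(1-S_j)$ with $S_k$ independent, $S_k\sim Beta(1-l,\alpha+lk)$. $\delta_x$ is the Dirac mass at $x$. *)

theory Defs
  imports "HOL-Probability.Probability"
begin

definition beta_density :: "real \<Rightarrow> real \<Rightarrow> real \<Rightarrow> real" where
  "beta_density a b x =
     (if 0 < x \<and> x < 1 then x powr (a - 1) * (1 - x) powr (b - 1) / Beta a b else 0)"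

definition beta_measure :: "real \<Rightarrow> real \<Rightarrow> real measure" where
  "beta_measure a b = density lborel (\<lambda>x. ennreal (beta_density a b x))"

text \<open>Stick-breaking weights, indexed from 0: W k = S k * prod_{j<k} (1 - S j).\<close>
definition stick_weights :: "(nat \<Rightarrow> real) \<Rightarrow> nat \<Rightarrow> real" where
  "stick_weights s k = s k * (\<Prod>j<k. 1 - s j)"

definition atomic_rm :: "(nat \<Rightarrow> real) \<Rightarrow> (nat \<Rightarrow> 'x) \<Rightarrow> 'x set \<Rightarrow> ennreal" where
  "atomic_rm w \<xi> A = (\<Sum>k. ennreal (w k) * indicator A (\<xi> k))"

text \<open>Canonical probability space for PD(alpha,l,H): independent
  S_k ~ Beta(1-l, alpha + l*k) (paper index k = Suc k here), independent of i.i.d. xi_k ~ H.\<close>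
definition PD_space :: "real \<Rightarrow> real \<Rightarrow> 'x measure \<Rightarrow> ((nat \<Rightarrow> real) \<times> (nat \<Rightarrow> 'x)) measure" where
  "PD_space \<alpha> l H =
     (PiM UNIV (\<lambda>k. beta_measure (1 - l) (\<alpha> + l * real (Suc k)))) \<Otimes>\<^sub>M (PiM UNIV (\<lambda>_. H))"

definition PD_rm :: "((nat \<Rightarrow> real) \<times> (nat \<Rightarrow> 'x)) \<Rightarrow> 'x set \<Rightarrow> ennreal" where
  "PD_rm p = atomic_rm (stick_weights (fst p)) (snd p)"

definition same_law_rm ::
  "'x measure \<Rightarrow> 'a measure \<Rightarrow> ('a \<Rightarrow> 'x set \<Rightarrow> ennreal) \<Rightarrow> 'b measure \<Rightarrow> ('b \<Rightarrow> 'x set \<Rightarrow> ennreal) \<Rightarrow> bool"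
  where
  "same_law_rm X M G N F \<longleftrightarrow>
     (\<forall>As. set As \<subseteq> sets X \<longrightarrow>
        distr M (PiM {..<length As} (\<lambda>_. borel)) (\<lambda>\<omega>. restrict (\<lambda>n. G \<omega> (As ! n)) {..<length As})
      = distr N (PiM {..<length As} (\<lambda>_. borel)) (\<lambda>\<omega>. restrict (\<lambda>n. F \<omega> (As ! n)) {..<length As}))"

definition is_PD :: "'x measure \<Rightarrow> 'w measure \<Rightarrow> ('w \<Rightarrow> 'x set \<Rightarrow> ennreal) \<Rightarrow> real \<Rightarrow> real \<Rightarrow> 'x measure \<Rightarrow> bool"
  where "is_PD X M G \<alpha> l H \<longleftrightarrow> same_law_rm X M G (PD_space \<alpha> l H) PD_rm"

end

theory Submission
  imports Defs
begin


lemma Beta_pos': "a > 0 \<Longrightarrow> b > 0 \<Longrightarrow> Beta a b > (0::real)"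
  by (simp add: Beta_def)

lemma Beta_identity:
  fixes a b c :: real assumes "a>0" "b>0" "c>0"
  shows "Beta b c / (Beta a b * Beta (a+b) c) = 1 / Beta a (b+c)"
proof -
  have "Gamma a > 0" "Gamma b > 0" "Gamma c > 0" "Gamma (a+b) > 0" "Gamma (b+c) > 0" "Gamma (a+(b+c)) > 0"
    using assms by auto
  then show ?thesis by (simp add: Beta_def field_simps add_ac)
qed

lemma beta_density_nonneg: "0 \<le> beta_density a b x" if "a > 0" "b > 0"
  using that by (simp add: beta_density_def Beta_pos' less_imp_le)

lemma beta_density_meas[measurable]: "beta_density a b \<in> borel_measurable borel"
  unfolding beta_density_def by measurable

lemma int01:
  fixes b c :: real assumes "b>0" "c>0"
  shows "(\<integral>\<^sup>+t. ennreal (t powr (b-1) * (1-t) powr (c-1)) * indicator {0<..<1} t \<partial>lborel) = ennreal (Beta b c)"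
  apply (rule nn_integral_has_integral_lebesgue')
   apply simp
  using has_integral_Beta_real[OF assms] by (simp add: has_integral_Icc_iff_Ioo)

lemma alg1:
  fixes P Q y X Z W B1 B2 :: real
  assumes "P \<noteq> 0" "Q \<noteq> 0" "y \<noteq> 0" "B1 \<noteq> 0" "B2 \<noteq> 0"
  shows "P * Q * y * X / B1 * (Z / P * (W / Q) / B2) / y = Z / (B2 * B1) * W * X"
  using assms by (simp add: field_simps)

lemma alg2:
  fixes x Z D W B :: real
  shows "x * (Z / D * W) * B = Z * (x * W) * (B / D)"
  by (simp add: mult_ac times_divide_eq_left times_divide_eq_right)

lemma beta_core:
  fixes a b c z :: real assumes a: "a>0" and b: "b>0" and c: "c>0"
  shows "(\<integral>\<^sup>+y. ennreal (if 0<y \<and> y<1 then beta_density (a+b) c y * beta_density a b (z/y) / y else 0) \<partial>lborel)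
     = ennreal (beta_density a (b+c) z)"
proof (cases "0<z \<and> z<1")
  case False
  have "(if 0<y \<and> y<1 then beta_density (a+b) c y * beta_density a b (z/y) / y else 0) = 0" for y
  proof (cases "0<y \<and> y<1")
    case True
    have "\<not> (0 < z/y \<and> z/y < 1)"
    proof
      assume "0 < z/y \<and> z/y < 1"
      then have "0 < z" "z < y" using True by (auto simp: divide_less_eq zero_less_divide_iff)
      then show False using False True by auto
    qed
    then have "beta_density a b (z/y) = 0" unfolding beta_density_def by (rule if_not_P)
    then show ?thesis by simp
  next
    case False then show ?thesis by (rule if_not_P)
  qed
  moreover have "beta_density a (b+c) z = 0" unfolding beta_density_def by (rule if_not_P) (use False in auto)
  ultimately show ?thesis by simp
next
  case True
  define C where "C = z powr (a-1) / (Beta a b * Beta (a+b) c)"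
  have Bp: "Beta a b > 0" "Beta (a+b) c > 0" "Beta b c > 0" "Beta a (b+c) > 0"
    using a b c by (auto intro: Beta_pos')
  have C0: "C \<ge> 0" using Bp by (simp add: C_def)
  have eq: "ennreal (if 0<y \<and> y<1 then beta_density (a+b) c y * beta_density a b (z/y) / y else 0)
      = ennreal (C * (y-z) powr (b-1) * (1-y) powr (c-1)) * indicator {z<..<1} y" for y
  proof (cases "z < y \<and> y < 1")
    case True
    then have y0: "0 < y" using \<open>0<z \<and> z<1\<close> by auto
    have zy: "0 < z/y" "z/y < 1" using True y0 \<open>0<z \<and> z<1\<close> by (auto simp: divide_less_eq)
    have "1 - z/y = (y-z)/y" using y0 by (simp add: field_simps)
    then have "beta_density (a+b) c y * beta_density a b (z/y) / y
       = y powr (a+b-1) * (1-y) powr (c-1) / Beta (a+b) c *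
         (z powr (a-1) / y powr (a-1) * ((y-z) powr (b-1) / y powr (b-1)) / Beta a b) / y"
      using True y0 zy by (simp add: beta_density_def powr_divide)
    also have "y powr (a+b-1) = y powr (a-1) * y powr (b-1) * y"
    proof -
      have "y powr (a+b-1) = y powr ((a-1)+(b-1)+1)" by (simp add: algebra_simps)
      also have "\<dots> = y powr (a-1) * y powr (b-1) * y powr 1" by (simp only: powr_add)
      finally show ?thesis using y0 by simp
    qed
    also have "y powr (a-1) * y powr (b-1) * y * (1-y) powr (c-1) / Beta (a+b) c *
         (z powr (a-1) / y powr (a-1) * ((y-z) powr (b-1) / y powr (b-1)) / Beta a b) / y
       = C * (y-z) powr (b-1) * (1-y) powr (c-1)"
      unfolding C_def by (rule alg1) (use y0 Bp in auto)
    finally show ?thesis using True y0 by simp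
  next
    case False
    show ?thesis
    proof (cases "0<y \<and> y<1")
      case True
      then have "z/y \<ge> 1" using False by (auto simp: le_divide_eq)
      then show ?thesis using True False by (simp add: beta_density_def)
    qed (use False in auto)
  qed
  have "(\<integral>\<^sup>+y. ennreal (if 0<y \<and> y<1 then beta_density (a+b) c y * beta_density a b (z/y) / y else 0) \<partial>lborel)
     = (\<integral>\<^sup>+y. ennreal (C * (y-z) powr (b-1) * (1-y) powr (c-1)) * indicator {z<..<1} y \<partial>lborel)"
    by (simp add: eq)
  also have "\<dots> = \<bar>1-z\<bar> * (\<integral>\<^sup>+t. ennreal (C * ((z + (1-z)*t)-z) powr (b-1) * (1-(z + (1-z)*t)) powr (c-1))
        * indicator {z<..<1} (z + (1-z)*t) \<partial>lborel)"
    by (rule nn_integral_real_affine) (use True in auto)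
  also have "(\<lambda>t. ennreal (C * ((z + (1-z)*t)-z) powr (b-1) * (1-(z + (1-z)*t)) powr (c-1))
        * indicator {z<..<1} (z + (1-z)*t))
     = (\<lambda>t. ennreal (C * (1-z) powr (b+c-2)) * (ennreal (t powr (b-1) * (1-t) powr (c-1)) * indicator {0<..<1} t))"
  proof
    fix t
    show "ennreal (C * ((z + (1-z)*t)-z) powr (b-1) * (1-(z + (1-z)*t)) powr (c-1))
        * indicator {z<..<1} (z + (1-z)*t)
     = ennreal (C * (1-z) powr (b+c-2)) * (ennreal (t powr (b-1) * (1-t) powr (c-1)) * indicator {0<..<1} t)"
    proof (cases "0 < t \<and> t < 1")
      case tt: True
      have p1: "0 < (1-z)*t" using tt True by simp
      have p2: "(1-z)*t < (1-z)*1" using tt True by (intro mult_strict_left_mono) auto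
      have i: "z + (1-z)*t \<in> {z<..<1}" using p1 p2 by auto
      have "1-(z + (1-z)*t) = (1-z)*(1-t)" by (simp add: algebra_simps)
      moreover have "(z + (1-z)*t)-z = (1-z)*t" by simp
      moreover have "(1-z) powr (b+c-2) = (1-z) powr (b-1) * (1-z) powr (c-1)"
        by (simp add: powr_add[symmetric])
      ultimately have re: "C * ((z + (1-z)*t)-z) powr (b-1) * (1-(z + (1-z)*t)) powr (c-1)
          = C * (1-z) powr (b+c-2) * (t powr (b-1) * (1-t) powr (c-1))"
        by (simp add: powr_mult mult_ac)
      show ?thesis using i tt C0 unfolding re by (simp add: ennreal_mult)
    next
      case False
      have "z + (1-z)*t \<notin> {z<..<1}"
      proof
        assume "z + (1-z)*t \<in> {z<..<1}"
        then have g1: "z < z + (1-z)*t" and g2: "z + (1-z)*t < 1" by auto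
        from g1 have h1: "0 < (1-z)*t" by linarith
        from g2 have h2: "(1-z)*t < (1-z)*1" by simp
        from h1 True have "0 < t" by (simp add: zero_less_mult_iff)
        moreover from h2 True have "t < 1" by (subst (asm) mult_less_cancel_left_pos) auto
        ultimately show False using False by auto
      qed
      then show ?thesis using False by simp
    qed
  qed
  also have "(\<integral>\<^sup>+t. ennreal (C * (1-z) powr (b+c-2)) * (ennreal (t powr (b-1) * (1-t) powr (c-1)) * indicator {0<..<1} t) \<partial>lborel)
     = ennreal (C * (1-z) powr (b+c-2)) * ennreal (Beta b c)"
    by (subst nn_integral_cmult) (simp_all add: int01 b c)
  also have "ennreal \<bar>1-z\<bar> * (ennreal (C * (1-z) powr (b+c-2)) * ennreal (Beta b c))
     = ennreal ((1-z) * (C * (1-z) powr (b+c-2)) * Beta b c)"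
    using True C0 Bp by (simp add: ennreal_mult mult_nonneg_nonneg mult.assoc)
  also have "(1-z) * (C * (1-z) powr (b+c-2)) * Beta b c = beta_density a (b+c) z"
  proof -
    have pw: "(1-z) * (1-z) powr (b+c-2) = (1-z) powr (b+c-1)"
    proof -
      have "(1-z) powr (b+c-1) = (1-z) powr ((b+c-2) + 1)" by (simp add: algebra_simps)
      also have "\<dots> = (1-z) powr (b+c-2) * (1-z) powr 1" by (simp only: powr_add)
      finally show ?thesis using True by simp
    qed
    have bi: "Beta b c / (Beta a b * Beta (a+b) c) = 1 / Beta a (b+c)"
      by (rule Beta_identity[OF a b c])
    have "(1-z) * (C * (1-z) powr (b+c-2)) * Beta b c
        = z powr (a-1) * ((1-z) * (1-z) powr (b+c-2)) * (Beta b c / (Beta a b * Beta (a+b) c))"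
      unfolding C_def by (rule alg2)
    also have "\<dots> = z powr (a-1) * (1-z) powr (b+c-1) / Beta a (b+c)"
      unfolding pw bi by simp
    finally show ?thesis using True by (simp add: beta_density_def add_ac)
  qed
  finally show ?thesis .
qed



lemma sf_beta: "sigma_finite_measure (beta_measure a b)"
  unfolding beta_measure_def
  by (subst sigma_finite_measure.sigma_finite_iff_density_finite[OF sigma_finite_lborel]) auto

lemma beta_prod_measure:
  fixes a b c :: real assumes a: "a>0" and b: "b>0" and c: "c>0"
  shows "distr (beta_measure a b \<Otimes>\<^sub>M beta_measure (a+b) c) borel (\<lambda>p. fst p * snd p) = beta_measure a (b+c)"
proof (rule measure_eqI)
  show "sets (distr (beta_measure a b \<Otimes>\<^sub>M beta_measure (a+b) c) borel (\<lambda>p. fst p * snd p)) = sets (beta_measure a (b+c))"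
    by (simp add: beta_measure_def)
  fix A assume "A \<in> sets (distr (beta_measure a b \<Otimes>\<^sub>M beta_measure (a+b) c) borel (\<lambda>p. fst p * snd p))"
  then have A[measurable]: "A \<in> sets borel" by simp
  define f where "f = beta_density a b"
  define g where "g = beta_density (a+b) c"
  define K where "K = (\<lambda>z y::real. if 0<y \<and> y<1 then g y * f (z/y) / y else 0)"
  have [measurable]: "f \<in> borel_measurable borel" "g \<in> borel_measurable borel" unfolding f_def g_def by measurable
  have f0: "f x \<ge> 0" "g x \<ge> 0" for x unfolding f_def g_def using a b c by (auto intro!: beta_density_nonneg)
  have Kmeas[measurable]: "(\<lambda>(z,y). ennreal (K z y) * indicator A z) \<in> borel_measurable (lborel \<Otimes>\<^sub>M lborel)"
    unfolding K_def by measurable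
  have pre2: "(\<lambda>p::real\<times>real. fst p * snd p) -` A \<in> sets (lborel \<Otimes>\<^sub>M lborel)"
    using measurable_sets[OF _ A, of "\<lambda>p::real\<times>real. fst p * snd p" "lborel \<Otimes>\<^sub>M lborel"]
    by (simp add: space_pair_measure)
  have pair: "beta_measure a b \<Otimes>\<^sub>M beta_measure (a+b) c = density (lborel \<Otimes>\<^sub>M lborel) (\<lambda>(x,y). ennreal (f x) * ennreal (g y))"
    unfolding beta_measure_def f_def g_def
    by (rule pair_measure_density) (auto intro: sf_beta[unfolded beta_measure_def] lborel.sigma_finite_measure_axioms)
  have "emeasure (distr (beta_measure a b \<Otimes>\<^sub>M beta_measure (a+b) c) borel (\<lambda>p. fst p * snd p)) A
      = emeasure (density (lborel \<Otimes>\<^sub>M lborel) (\<lambda>(x,y). ennreal (f x) * ennreal (g y))) ((\<lambda>p. fst p * snd p) -` A)"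
  proof -
    have m: "(\<lambda>p::real\<times>real. fst p * snd p) \<in> borel_measurable (borel \<Otimes>\<^sub>M borel)" by measurable
    have pre: "(\<lambda>p::real\<times>real. fst p * snd p) -` A \<in> sets (borel \<Otimes>\<^sub>M borel)"
      using measurable_sets[OF m A] by (simp add: space_pair_measure)
    show ?thesis unfolding pair by (subst emeasure_distr) (auto simp: space_pair_measure pre)
  qed
  also have "\<dots> = (\<integral>\<^sup>+p. ennreal (f (fst p)) * ennreal (g (snd p)) * indicator A (fst p * snd p) \<partial>(lborel \<Otimes>\<^sub>M lborel))"
    using pre2 by (subst emeasure_density) (auto intro!: nn_integral_cong simp: split_beta indicator_def)
  also have "\<dots> = (\<integral>\<^sup>+y. \<integral>\<^sup>+x. ennreal (f x) * ennreal (g y) * indicator A (x * y) \<partial>lborel \<partial>lborel)"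
    by (subst lborel_pair.nn_integral_snd[symmetric]) auto
  also have "\<dots> = (\<integral>\<^sup>+y. \<integral>\<^sup>+z. ennreal (K z y) * indicator A z \<partial>lborel \<partial>lborel)"
  proof (rule nn_integral_cong)
    fix y :: real
    show "(\<integral>\<^sup>+x. ennreal (f x) * ennreal (g y) * indicator A (x * y) \<partial>lborel) = (\<integral>\<^sup>+z. ennreal (K z y) * indicator A z \<partial>lborel)"
    proof (cases "0 < y \<and> y < 1")
      case True
      have "(\<integral>\<^sup>+x. ennreal (f x) * ennreal (g y) * indicator A (x * y) \<partial>lborel)
          = \<bar>1/y\<bar> * (\<integral>\<^sup>+z. ennreal (f (0 + 1/y*z)) * ennreal (g y) * indicator A ((0 + 1/y*z) * y) \<partial>lborel)"
        by (rule nn_integral_real_affine) (use True in auto)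
      also have "\<dots> = (\<integral>\<^sup>+z. ennreal (1/y) * (ennreal (f (z/y)) * ennreal (g y) * indicator A z) \<partial>lborel)"
        using True by (subst nn_integral_cmult) auto
      also have "\<dots> = (\<integral>\<^sup>+z. ennreal (K z y) * indicator A z \<partial>lborel)"
        using True f0 by (intro nn_integral_cong) (simp add: K_def ennreal_mult[symmetric] mult_ac)
      finally show ?thesis .
    next
      case False
      then have "g y = 0" unfolding g_def beta_density_def by (rule if_not_P)
      moreover have "K z y = 0" for z unfolding K_def by (rule if_not_P) (use False in auto)
      ultimately show ?thesis by simp
    qed
  qed
  also have "\<dots> = (\<integral>\<^sup>+z. \<integral>\<^sup>+y. ennreal (K z y) * indicator A z \<partial>lborel \<partial>lborel)"
    by (rule lborel_pair.Fubini') (use Kmeas in simp)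
  also have "\<dots> = (\<integral>\<^sup>+z. ennreal (beta_density a (b+c) z) * indicator A z \<partial>lborel)"
  proof (rule nn_integral_cong)
    fix z :: real
    have "(\<integral>\<^sup>+y. ennreal (K z y) * indicator A z \<partial>lborel) = (\<integral>\<^sup>+y. ennreal (K z y) \<partial>lborel) * indicator A z"
      by (rule nn_integral_multc) (simp add: K_def)
    also have "(\<integral>\<^sup>+y. ennreal (K z y) \<partial>lborel) = ennreal (beta_density a (b+c) z)"
      unfolding K_def f_def g_def by (rule beta_core[OF a b c])
    finally show "(\<integral>\<^sup>+y. ennreal (K z y) * indicator A z \<partial>lborel) = ennreal (beta_density a (b+c) z) * indicator A z" .
  qed
  also have "\<dots> = emeasure (beta_measure a (b+c)) A"
    unfolding beta_measure_def by (subst emeasure_density) (auto intro!: nn_integral_cong simp: mult.commute)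
  finally show "emeasure (distr (beta_measure a b \<Otimes>\<^sub>M beta_measure (a+b) c) borel (\<lambda>p. fst p * snd p)) A = emeasure (beta_measure a (b+c)) A" .
qed



lemma (in prob_space) beta_prod_rv:
  fixes X Y :: "'a \<Rightarrow> real"
  assumes ind: "indep_var borel X borel Y" and a: "a>0" and b: "b>0" and c: "c>0"
    and LX: "distr M borel X = beta_measure a b" and LY: "distr M borel Y = beta_measure (a+b) c"
  shows "distr M borel (\<lambda>\<omega>. X \<omega> * Y \<omega>) = beta_measure a (b+c)"
proof -
  have rv: "X \<in> borel_measurable M" "Y \<in> borel_measurable M"
    and j: "distr M borel X \<Otimes>\<^sub>M distr M borel Y = distr M (borel \<Otimes>\<^sub>M borel) (\<lambda>x. (X x, Y x))"
    using ind unfolding indep_var_distribution_eq by blast+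
  have "distr M borel (\<lambda>\<omega>. X \<omega> * Y \<omega>) = distr M borel ((\<lambda>p. fst p * snd p) \<circ> (\<lambda>x. (X x, Y x)))"
    by (simp add: comp_def)
  also have "\<dots> = distr (distr M (borel \<Otimes>\<^sub>M borel) (\<lambda>x. (X x, Y x))) borel (\<lambda>p. fst p * snd p)"
    using rv by (subst distr_distr) auto
  also have "\<dots> = beta_measure a (b+c)"
    unfolding j[symmetric] LX LY by (rule beta_prod_measure[OF a b c])
  finally show ?thesis .
qed

lemma distributed_beta_distr:
  assumes "distributed M lborel X (\<lambda>x. ennreal (beta_density a b x))"
  shows "distr M borel X = beta_measure a b" "X \<in> borel_measurable M"
proof -
  have "distr M borel X = distr M lborel X" by (rule distr_cong) auto
  then show "distr M borel X = beta_measure a b"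
    using assms by (simp add: distributed_def beta_measure_def)
  show "X \<in> borel_measurable M" using assms by (simp add: distributed_def)
qed

lemma (in prob_space) indep_set_joint:
  assumes X[measurable]: "X \<in> measurable M N1" and Y[measurable]: "Y \<in> measurable M N2"
  and ind: "indep_set (sigma_sets (space M) {X -` A \<inter> space M | A. A \<in> sets N1})
                      (sigma_sets (space M) {Y -` A \<inter> space M | A. A \<in> sets N2})"
  shows "distr M (N1 \<Otimes>\<^sub>M N2) (\<lambda>\<omega>. (X \<omega>, Y \<omega>)) = distr M N1 X \<Otimes>\<^sub>M distr M N2 Y"
proof (rule pair_measure_eqI[symmetric])
  show "sigma_finite_measure (distr M N1 X)" "sigma_finite_measure (distr M N2 Y)"
    by (rule prob_space_imp_sigma_finite, rule prob_space_distr, simp)+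
  show "sets (distr M N1 X \<Otimes>\<^sub>M distr M N2 Y) = sets (distr M (N1 \<Otimes>\<^sub>M N2) (\<lambda>\<omega>. (X \<omega>, Y \<omega>)))"
    by (simp add: sets_pair_measure_cong[OF sets_distr sets_distr])
  fix A B assume A: "A \<in> sets (distr M N1 X)" and B: "B \<in> sets (distr M N2 Y)"
  then have A': "A \<in> sets N1" and B': "B \<in> sets N2" by auto
  have a: "X -` A \<inter> space M \<in> sigma_sets (space M) {X -` A \<inter> space M | A. A \<in> sets N1}"
    using A' by blast
  have b: "Y -` B \<inter> space M \<in> sigma_sets (space M) {Y -` A \<inter> space M | A. A \<in> sets N2}"
    using B' by blast
  have "prob ((X -` A \<inter> space M) \<inter> (Y -` B \<inter> space M)) = prob (X -` A \<inter> space M) * prob (Y -` B \<inter> space M)"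
    using ind[unfolded indep_sets2_eq] a b by blast
  moreover have "(\<lambda>\<omega>. (X \<omega>, Y \<omega>)) -` (A \<times> B) \<inter> space M = (X -` A \<inter> space M) \<inter> (Y -` B \<inter> space M)"
    by auto
  moreover have "A \<times> B \<in> sets (N1 \<Otimes>\<^sub>M N2)" using A' B' by auto
  ultimately show "emeasure (distr M N1 X) A * emeasure (distr M N2 Y) B = emeasure (distr M (N1 \<Otimes>\<^sub>M N2) (\<lambda>\<omega>. (X \<omega>, Y \<omega>))) (A \<times> B)"
    using A' B' by (simp add: emeasure_distr emeasure_eq_measure ennreal_mult[symmetric])
qed

lemma (in prob_space) PD_main:
  fixes T :: "nat \<Rightarrow> 'a \<Rightarrow> real" and Y :: "nat \<Rightarrow> 'a \<Rightarrow> 'x::topological_space"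
  assumes T_law: "\<And>k. distr M borel (T k) = beta_measure (1-l) (\<alpha> + l * real (Suc k))"
    and T_ind: "indep_vars (\<lambda>_. borel) T UNIV"
    and Y_law: "\<And>k. distr M borel (Y k) = H"
    and Y_ind: "indep_vars (\<lambda>_. borel) Y UNIV"
    and TY: "indep_set (sigma_sets (space M) {(\<lambda>\<omega> k. T k \<omega>) -` A \<inter> space M | A. A \<in> sets (PiM UNIV (\<lambda>_. borel :: real measure))})
                      (sigma_sets (space M) {(\<lambda>\<omega> k. Y k \<omega>) -` A \<inter> space M | A. A \<in> sets (PiM UNIV (\<lambda>_. borel :: 'x measure))})"
  shows "is_PD borel M (\<lambda>\<omega>. atomic_rm (stick_weights (\<lambda>k. T k \<omega>)) (\<lambda>k. Y k \<omega>)) \<alpha> l H"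
proof -
  have T_meas[measurable]: "\<And>k. T k \<in> borel_measurable M" using T_ind by (auto simp: indep_vars_def)
  have Y_meas[measurable]: "\<And>k. Y k \<in> borel_measurable M" using Y_ind by (auto simp: indep_vars_def)
  have D1: "distr M (PiM UNIV (\<lambda>_. borel)) (\<lambda>\<omega> k. T k \<omega>) = PiM UNIV (\<lambda>k. beta_measure (1-l) (\<alpha> + l * real (Suc k)))"
    using indep_vars_iff_distr_eq_PiM[where I=UNIV and M'="\<lambda>_. borel" and X=T, OF _ T_meas] T_ind
    by (simp add: restrict_UNIV T_law)
  have D2: "distr M (PiM UNIV (\<lambda>_. borel)) (\<lambda>\<omega> k. Y k \<omega>) = PiM UNIV (\<lambda>k. H)"
    using indep_vars_iff_distr_eq_PiM[where I=UNIV and M'="\<lambda>_. borel" and X=Y, OF _ Y_meas] Y_ind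
    by (simp add: restrict_UNIV Y_law)
  define P where "P = (PiM UNIV (\<lambda>_. borel) :: (nat \<Rightarrow> real) measure) \<Otimes>\<^sub>M (PiM UNIV (\<lambda>_. borel) :: (nat \<Rightarrow> 'x) measure)"
  define \<Phi> where "\<Phi> = (\<lambda>\<omega>. ((\<lambda>k. T k \<omega>), (\<lambda>k. Y k \<omega>)))"
  have m1: "(\<lambda>\<omega> k. T k \<omega>) \<in> measurable M (PiM UNIV (\<lambda>_. borel :: real measure))"
    using measurable_restrict[where I=UNIV and X="\<lambda>k \<omega>. T k \<omega>" and N=M and M="\<lambda>_. borel"] by (simp add: restrict_UNIV)
  have m2: "(\<lambda>\<omega> k. Y k \<omega>) \<in> measurable M (PiM UNIV (\<lambda>_. borel :: 'x measure))"
    using measurable_restrict[where I=UNIV and X="\<lambda>k \<omega>. Y k \<omega>" and N=M and M="\<lambda>_. borel"] by (simp add: restrict_UNIV)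
  have J: "distr M P \<Phi> = PD_space \<alpha> l H"
    unfolding P_def \<Phi>_def PD_space_def indep_set_joint[OF m1 m2 TY] D1 D2 ..
  have Phi_meas: "\<Phi> \<in> measurable M P"
    unfolding P_def \<Phi>_def using m1 m2 by (rule measurable_Pair)
  show ?thesis
    unfolding is_PD_def same_law_rm_def
  proof (intro allI impI)
    fix As :: "'x set list" assume As: "set As \<subseteq> sets borel"
    define F where "F = (\<lambda>p. restrict (\<lambda>n. PD_rm p (As ! n)) {..<length As})"
    have Fm: "F \<in> measurable P (PiM {..<length As} (\<lambda>_. borel))"
      unfolding F_def
    proof (rule measurable_restrict)
      fix n assume "n \<in> {..<length As}"
      then have A[measurable]: "As ! n \<in> sets borel" using As by auto
      show "(\<lambda>p. PD_rm p (As ! n)) \<in> borel_measurable P"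
        unfolding PD_rm_def atomic_rm_def stick_weights_def P_def by measurable
    qed
    have "distr M (PiM {..<length As} (\<lambda>_. borel)) (\<lambda>\<omega>. restrict (\<lambda>n. atomic_rm (stick_weights (\<lambda>k. T k \<omega>)) (\<lambda>k. Y k \<omega>) (As ! n)) {..<length As})
        = distr M (PiM {..<length As} (\<lambda>_. borel)) (F \<circ> \<Phi>)"
      by (simp add: F_def \<Phi>_def PD_rm_def comp_def)
    also have "\<dots> = distr (distr M P \<Phi>) (PiM {..<length As} (\<lambda>_. borel)) F"
      by (rule distr_distr[symmetric, OF Fm Phi_meas])
    also have "\<dots> = distr (PD_space \<alpha> l H) (PiM {..<length As} (\<lambda>_. borel)) (\<lambda>\<omega>. restrict (\<lambda>n. PD_rm \<omega> (As ! n)) {..<length As})"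
      unfolding J F_def ..
    finally show "distr M (PiM {..<length As} (\<lambda>_. borel)) (\<lambda>\<omega>. restrict (\<lambda>n. atomic_rm (stick_weights (\<lambda>k. T k \<omega>)) (\<lambda>k. Y k \<omega>) (As ! n)) {..<length As})
        = distr (PD_space \<alpha> l H) (PiM {..<length As} (\<lambda>_. borel)) (\<lambda>\<omega>. restrict (\<lambda>n. PD_rm \<omega> (As ! n)) {..<length As})" .
  qed
qed



lemma (in prob_space) indep_set_sym: "indep_set A B \<Longrightarrow> indep_set B A"
  unfolding indep_sets2_eq
proof (elim conjE, intro conjI ballI)
  fix a b assume H: "\<forall>a\<in>A. \<forall>b\<in>B. prob (a \<inter> b) = prob a * prob b" and a: "a \<in> B" and b: "b \<in> A"
  have "prob (b \<inter> a) = prob b * prob a" using H a b by blast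
  then show "prob (a \<inter> b) = prob a * prob b" by (simp add: Int_commute mult.commute)
qed

lemma (in prob_space) indep_var_sym: "indep_var S X T Y \<Longrightarrow> indep_var T Y S X"
  unfolding indep_var_eq using indep_set_sym by blast

lemma (in prob_space) indep_set_mono':
  "indep_set A B \<Longrightarrow> A' \<subseteq> A \<Longrightarrow> B' \<subseteq> B \<Longrightarrow> indep_set A' B'"
  unfolding indep_set_def by (rule indep_sets_mono_sets) (auto split: bool.split)

lemma sigma_sets_comp_subset:
  assumes g: "g \<in> measurable N N'" and X: "\<And>\<omega>. \<omega> \<in> space M \<Longrightarrow> X \<omega> \<in> space N"
  shows "sigma_sets (space M) {(\<lambda>\<omega>. g (X \<omega>)) -` A \<inter> space M | A. A \<in> sets N'}
       \<subseteq> sigma_sets (space M) {X -` A \<inter> space M | A. A \<in> sets N}"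
proof (rule sigma_sets_subseteq, safe)
  fix A assume A: "A \<in> sets N'"
  have "(\<lambda>\<omega>. g (X \<omega>)) -` A \<inter> space M = X -` (g -` A \<inter> space N) \<inter> space M"
    using X by auto
  moreover have "g -` A \<inter> space N \<in> sets N" using measurable_sets[OF g A] .
  ultimately show "\<exists>B. (\<lambda>\<omega>. g (X \<omega>)) -` A \<inter> space M = X -` B \<inter> space M \<and> B \<in> sets N"
    by blast
qed



theorem proposition4:
  fixes M :: "'w measure" and r :: nat and l :: real
    and G0 :: "(nat \<Rightarrow> 'x::polish_space) measure"
    and \<phi> :: "nat \<Rightarrow> 'w \<Rightarrow> (nat \<Rightarrow> 'x)"
    and S :: "nat \<Rightarrow> nat \<Rightarrow> 'w \<Rightarrow> real"
  assumes M: "prob_space M"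
    and r: "r \<ge> 2"
    and l: "0 \<le> l" "l < 1"
    and G0: "prob_space G0" "sets G0 = sets (PiM {1..r} (\<lambda>_. borel :: 'x measure))"
    and phi_meas: "\<And>k. \<phi> k \<in> measurable M (PiM {1..r} (\<lambda>_. borel :: 'x measure))"
    and phi_law: "\<And>k. distr M (PiM {1..r} (\<lambda>_. borel :: 'x measure)) (\<phi> k) = G0"
    and phi_indep: "prob_space.indep_vars M (\<lambda>_. PiM {1..r} (\<lambda>_. borel :: 'x measure)) \<phi> UNIV"
    and S_indep: "prob_space.indep_vars M (\<lambda>_. PiM {1..r} (\<lambda>_. borel :: real measure))
                    (\<lambda>k \<omega>. restrict (\<lambda>i. S i k \<omega>) {1..r}) UNIV"
    and S_phi_indep: "prob_space.indep_set M
                    (sigma_sets (space M)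
                      {(\<lambda>\<omega>. restrict (\<lambda>(i, k). S i k \<omega>) ({1..r} \<times> UNIV)) -` A \<inter> space M
                        | A. A \<in> sets (PiM ({1..r} \<times> UNIV) (\<lambda>_. borel :: real measure))})
                    (sigma_sets (space M)
                      {(\<lambda>\<omega>. \<lambda>k. \<phi> k \<omega>) -` A \<inter> space M
                        | A. A \<in> sets (PiM UNIV (\<lambda>_. PiM {1..r} (\<lambda>_. borel :: 'x measure)))})"
  shows
    "(\<forall>(\<alpha>1::real) (\<alpha>2::real) (V :: nat \<Rightarrow> nat \<Rightarrow> 'w \<Rightarrow> real).
        0 < \<alpha>1 \<and> 0 < \<alpha>2
      \<and> (\<forall>i\<in>{1..r}. \<forall>k \<omega>. S i k \<omega> = V 0 k \<omega> * V i k \<omega>)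
      \<and> (\<forall>k. prob_space.indep_vars M (\<lambda>_. borel) (\<lambda>j. V j k) {0..r})
      \<and> (\<forall>k. distributed M lborel (V 0 k)
                (\<lambda>x. ennreal (beta_density (1 - l + \<alpha>1) (\<alpha>2 + l * real (Suc k)) x)))
      \<and> (\<forall>i\<in>{1..r}. \<forall>k. distributed M lborel (V i k)
                (\<lambda>x. ennreal (beta_density (1 - l) \<alpha>1 x)))
      \<longrightarrow> (\<forall>i\<in>{1..r}. is_PD borel M (\<lambda>\<omega>. atomic_rm (stick_weights (\<lambda>k. S i k \<omega>)) (\<lambda>k. \<phi> k \<omega> i))
                         (\<alpha>1 + \<alpha>2) l (distr G0 borel (\<lambda>y. y i))))
   \<and> (\<forall>(\<alpha> :: nat \<Rightarrow> real) (V :: nat \<Rightarrow> nat \<Rightarrow> 'w \<Rightarrow> real).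
        (\<forall>j\<in>{1..r}. 0 < \<alpha> j)
      \<and> (\<forall>i\<in>{1..r}. \<forall>k \<omega>. S i k \<omega> = (\<Prod>j\<in>{0..r - i}. V j k \<omega>))
      \<and> (\<forall>k. prob_space.indep_vars M (\<lambda>_. borel) (\<lambda>j. V j k) {0..r - 1})
      \<and> (\<forall>k. distributed M lborel (V 0 k)
                (\<lambda>x. ennreal (beta_density (1 - l) (\<alpha> 1 + l * real (Suc k)) x)))
      \<and> (\<forall>j\<in>{1..r - 1}. \<forall>k. distributed M lborel (V j k)
                (\<lambda>x. ennreal (beta_density (1 + (\<Sum>m\<in>{1..j}. \<alpha> m) + l * real k) (\<alpha> (Suc j)) x)))
      \<longrightarrow> (\<forall>i\<in>{1..r}. is_PD borel M (\<lambda>\<omega>. atomic_rm (stick_weights (\<lambda>k. S i k \<omega>)) (\<lambda>k. \<phi> k \<omega> i))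
                         (\<Sum>m\<in>{1..r - i + 1}. \<alpha> m) l (distr G0 borel (\<lambda>y. y i))))"
proof -
  interpret prob_space M by (rule M)
  have T_ind: "indep_vars (\<lambda>_. borel) (\<lambda>k. S i k) UNIV" if i: "i \<in> {1..r}" for i
  proof -
    have "indep_vars (\<lambda>_. borel) (\<lambda>k x. restrict (\<lambda>i. S i k x) {1..r} i) UNIV"
      by (rule indep_vars_compose2[OF S_indep]) (rule measurable_component_singleton, rule i)
    moreover have "(\<lambda>k x. restrict (\<lambda>i. S i k x) {1..r} i) = (\<lambda>k. S i k)" using i by auto
    ultimately show ?thesis by simp
  qed
  have Y_ind: "indep_vars (\<lambda>_. borel) (\<lambda>k \<omega>. \<phi> k \<omega> i) UNIV" if i: "i \<in> {1..r}" for i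
    by (rule indep_vars_compose2[OF phi_indep]) (rule measurable_component_singleton, rule i)
  have Y_law: "distr M borel (\<lambda>\<omega>. \<phi> k \<omega> i) = distr G0 borel (\<lambda>y. y i)" if i: "i \<in> {1..r}" for i k
  proof -
    have "distr M borel (\<lambda>\<omega>. \<phi> k \<omega> i) = distr M borel ((\<lambda>y. y i) \<circ> \<phi> k)" by (simp add: comp_def)
    also have "\<dots> = distr (distr M (PiM {1..r} (\<lambda>_. borel)) (\<phi> k)) borel (\<lambda>y. y i)"
      by (rule distr_distr[symmetric, OF measurable_component_singleton[OF i] phi_meas])
    also have "\<dots> = distr G0 borel (\<lambda>y. y i)" by (simp only: phi_law)
    finally show ?thesis .
  qed
  have TY: "indep_set (sigma_sets (space M) {(\<lambda>\<omega> k. S i k \<omega>) -` A \<inter> space M | A. A \<in> sets (PiM UNIV (\<lambda>_. borel :: real measure))})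
                      (sigma_sets (space M) {(\<lambda>\<omega> k. \<phi> k \<omega> i) -` A \<inter> space M | A. A \<in> sets (PiM UNIV (\<lambda>_. borel :: 'x measure))})"
    if i: "i \<in> {1..r}" for i
  proof (rule indep_set_mono'[OF S_phi_indep])
    have g: "(\<lambda>x k. x (i,k)) \<in> measurable (PiM ({1..r} \<times> UNIV) (\<lambda>_. borel :: real measure)) (PiM UNIV (\<lambda>_. borel :: real measure))"
      using measurable_restrict[where I=UNIV and X="\<lambda>k x. x (i,k)" and N="PiM ({1..r} \<times> UNIV) (\<lambda>_. borel :: real measure)" and M="\<lambda>_. borel :: real measure"] i
      by (simp add: restrict_UNIV)
    have "sigma_sets (space M) {(\<lambda>\<omega>. (\<lambda>x k. x (i,k)) (restrict (\<lambda>(i, k). S i k \<omega>) ({1..r} \<times> UNIV))) -` A \<inter> space M | A. A \<in> sets (PiM UNIV (\<lambda>_. borel :: real measure))}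
        \<subseteq> sigma_sets (space M) {(\<lambda>\<omega>. restrict (\<lambda>(i, k). S i k \<omega>) ({1..r} \<times> UNIV)) -` A \<inter> space M | A. A \<in> sets (PiM ({1..r} \<times> UNIV) (\<lambda>_. borel :: real measure))}"
      by (rule sigma_sets_comp_subset[OF g]) (auto simp: space_PiM PiE_def extensional_def)
    moreover have "(\<lambda>\<omega>. (\<lambda>x k. x (i,k)) (restrict (\<lambda>(i, k). S i k \<omega>) ({1..r} \<times> UNIV))) = (\<lambda>\<omega> k. S i k \<omega>)"
      using i by auto
    ultimately show "sigma_sets (space M) {(\<lambda>\<omega> k. S i k \<omega>) -` A \<inter> space M | A. A \<in> sets (PiM UNIV (\<lambda>_. borel :: real measure))}
        \<subseteq> sigma_sets (space M) {(\<lambda>\<omega>. restrict (\<lambda>(i, k). S i k \<omega>) ({1..r} \<times> UNIV)) -` A \<inter> space M | A. A \<in> sets (PiM ({1..r} \<times> UNIV) (\<lambda>_. borel :: real measure))}"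
      by simp
  next
    have g: "(\<lambda>x k. x k i) \<in> measurable (PiM UNIV (\<lambda>_. PiM {1..r} (\<lambda>_. borel :: 'x measure))) (PiM UNIV (\<lambda>_. borel :: 'x measure))"
    proof -
      have c: "(\<lambda>x. x k i) \<in> measurable (PiM UNIV (\<lambda>_. PiM {1..r} (\<lambda>_. borel :: 'x measure))) borel" for k
      proof -
        have "(\<lambda>x. x k) \<in> measurable (PiM UNIV (\<lambda>_. PiM {1..r} (\<lambda>_. borel :: 'x measure))) (PiM {1..r} (\<lambda>_. borel :: 'x measure))"
          by (rule measurable_component_singleton) simp
        moreover have "(\<lambda>y. y i) \<in> measurable (PiM {1..r} (\<lambda>_. borel :: 'x measure)) borel"
          by (rule measurable_component_singleton) (rule i)
        ultimately show ?thesis by (rule measurable_compose)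
      qed
      show ?thesis
        using measurable_restrict[where I=UNIV and X="\<lambda>k x. x k i" and N="PiM UNIV (\<lambda>_. PiM {1..r} (\<lambda>_. borel :: 'x measure))" and M="\<lambda>_. borel :: 'x measure", OF c]
        by (simp add: restrict_UNIV)
    qed
    have "sigma_sets (space M) {(\<lambda>\<omega>. (\<lambda>x k. x k i) (\<lambda>k. \<phi> k \<omega>)) -` A \<inter> space M | A. A \<in> sets (PiM UNIV (\<lambda>_. borel :: 'x measure))}
        \<subseteq> sigma_sets (space M) {(\<lambda>\<omega>. \<lambda>k. \<phi> k \<omega>) -` A \<inter> space M | A. A \<in> sets (PiM UNIV (\<lambda>_. PiM {1..r} (\<lambda>_. borel :: 'x measure)))}"
    proof (rule sigma_sets_comp_subset[OF g])
      fix \<omega> assume "\<omega> \<in> space M"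
      then show "(\<lambda>k. \<phi> k \<omega>) \<in> space (PiM UNIV (\<lambda>_. PiM {1..r} (\<lambda>_. borel :: 'x measure)))"
        using measurable_space[OF phi_meas] by (auto simp: space_PiM PiE_def extensional_def)
    qed
    then show "sigma_sets (space M) {(\<lambda>\<omega> k. \<phi> k \<omega> i) -` A \<inter> space M | A. A \<in> sets (PiM UNIV (\<lambda>_. borel :: 'x measure))}
        \<subseteq> sigma_sets (space M) {(\<lambda>\<omega>. \<lambda>k. \<phi> k \<omega>) -` A \<inter> space M | A. A \<in> sets (PiM UNIV (\<lambda>_. PiM {1..r} (\<lambda>_. borel :: 'x measure)))}"
      by simp
  qed
  have key: "is_PD borel M (\<lambda>\<omega>. atomic_rm (stick_weights (\<lambda>k. S i k \<omega>)) (\<lambda>k. \<phi> k \<omega> i)) \<alpha> l (distr G0 borel (\<lambda>y. y i))"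
    if i: "i \<in> {1..r}" and law: "\<And>k. distr M borel (S i k) = beta_measure (1-l) (\<alpha> + l * real (Suc k))" for i \<alpha>
    using PD_main[where T="S i" and Y="\<lambda>k \<omega>. \<phi> k \<omega> i", OF law T_ind[OF i] Y_law[OF i] Y_ind[OF i] TY[OF i]] .
  show ?thesis
  proof (intro conjI allI impI ballI)
    fix \<alpha>1 \<alpha>2 :: real and V :: "nat \<Rightarrow> nat \<Rightarrow> 'w \<Rightarrow> real" and i
    assume H: "0 < \<alpha>1 \<and> 0 < \<alpha>2
      \<and> (\<forall>i\<in>{1..r}. \<forall>k \<omega>. S i k \<omega> = V 0 k \<omega> * V i k \<omega>)
      \<and> (\<forall>k. prob_space.indep_vars M (\<lambda>_. borel) (\<lambda>j. V j k) {0..r})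
      \<and> (\<forall>k. distributed M lborel (V 0 k)
                (\<lambda>x. ennreal (beta_density (1 - l + \<alpha>1) (\<alpha>2 + l * real (Suc k)) x)))
      \<and> (\<forall>i\<in>{1..r}. \<forall>k. distributed M lborel (V i k)
                (\<lambda>x. ennreal (beta_density (1 - l) \<alpha>1 x)))"
      and i: "i \<in> {1..r}"
    show "is_PD borel M (\<lambda>\<omega>. atomic_rm (stick_weights (\<lambda>k. S i k \<omega>)) (\<lambda>k. \<phi> k \<omega> i))
                         (\<alpha>1 + \<alpha>2) l (distr G0 borel (\<lambda>y. y i))"
    proof (rule key[OF i])
      fix k
      have iv0: "indep_var borel (V i k) borel (\<lambda>\<omega>. \<Prod>j\<in>{0}. V j k \<omega>)"
        by (rule indep_vars_prod[where X="\<lambda>j. V j k" and I="{0}" and i=i])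
           (use i H in \<open>auto intro: indep_vars_subset\<close>)
      then have iv: "indep_var borel (V i k) borel (V 0 k)" by simp
      have LX: "distr M borel (V i k) = beta_measure (1-l) \<alpha>1"
        using H i by (intro distributed_beta_distr) auto
      have LY: "distr M borel (V 0 k) = beta_measure (1-l+\<alpha>1) (\<alpha>2 + l * real (Suc k))"
        using H by (intro distributed_beta_distr) auto
      have "distr M borel (\<lambda>\<omega>. V i k \<omega> * V 0 k \<omega>) = beta_measure (1-l) (\<alpha>1 + (\<alpha>2 + l * real (Suc k)))"
        by (rule beta_prod_rv[OF iv _ _ _ LX LY]) (use H l in \<open>auto intro!: add_pos_nonneg\<close>)
      moreover have "S i k = (\<lambda>\<omega>. V i k \<omega> * V 0 k \<omega>)" using H i by (auto simp: fun_eq_iff)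
      ultimately show "distr M borel (S i k) = beta_measure (1-l) (\<alpha>1 + \<alpha>2 + l * real (Suc k))"
        by (simp add: add.assoc)
    qed
  next
    fix \<alpha> :: "nat \<Rightarrow> real" and V :: "nat \<Rightarrow> nat \<Rightarrow> 'w \<Rightarrow> real" and i
    assume H: "(\<forall>j\<in>{1..r}. 0 < \<alpha> j)
      \<and> (\<forall>i\<in>{1..r}. \<forall>k \<omega>. S i k \<omega> = (\<Prod>j\<in>{0..r - i}. V j k \<omega>))
      \<and> (\<forall>k. prob_space.indep_vars M (\<lambda>_. borel) (\<lambda>j. V j k) {0..r - 1})
      \<and> (\<forall>k. distributed M lborel (V 0 k)
                (\<lambda>x. ennreal (beta_density (1 - l) (\<alpha> 1 + l * real (Suc k)) x)))
      \<and> (\<forall>j\<in>{1..r - 1}. \<forall>k. distributed M lborel (V j k)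
                (\<lambda>x. ennreal (beta_density (1 + (\<Sum>m\<in>{1..j}. \<alpha> m) + l * real k) (\<alpha> (Suc j)) x)))"
      and i: "i \<in> {1..r}"
    have claim: "m \<le> r - 1 \<Longrightarrow> distr M borel (\<lambda>\<omega>. \<Prod>j\<in>{0..m}. V j k \<omega>)
        = beta_measure (1-l) ((\<Sum>j\<in>{1..Suc m}. \<alpha> j) + l * real (Suc k))" for m k
    proof (induction m)
      case 0
      have "distr M borel (V 0 k) = beta_measure (1-l) (\<alpha> 1 + l * real (Suc k))"
        using H by (intro distributed_beta_distr) auto
      then show ?case by simp
    next
      case (Suc m)
      define b where "b = (\<Sum>j\<in>{1..Suc m}. \<alpha> j) + l * real (Suc k)"
      have IH: "distr M borel (\<lambda>\<omega>. \<Prod>j\<in>{0..m}. V j k \<omega>) = beta_measure (1-l) b"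
        using Suc b_def by simp
      have iv0: "indep_var borel (V (Suc m) k) borel (\<lambda>\<omega>. \<Prod>j\<in>{0..m}. V j k \<omega>)"
        by (rule indep_vars_prod[where X="\<lambda>j. V j k" and I="{0..m}" and i="Suc m"])
           (use Suc.prems H in \<open>auto intro: indep_vars_subset\<close>)
      then have iv: "indep_var borel (\<lambda>\<omega>. \<Prod>j\<in>{0..m}. V j k \<omega>) borel (V (Suc m) k)"
        by (rule indep_var_sym)
      have pos: "0 < \<alpha> j" if "j \<in> {1..Suc (Suc m)}" for j
        using H that Suc.prems by auto
      have b0: "0 < b" unfolding b_def using pos l
        by (intro add_pos_nonneg sum_pos) auto
      have dV: "distr M borel (V (Suc m) k) = beta_measure (1 + (\<Sum>j\<in>{1..Suc m}. \<alpha> j) + l * real k) (\<alpha> (Suc (Suc m)))"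
      proof -
        have sm: "Suc m \<in> {1..r - 1}" using Suc.prems by auto
        have "distributed M lborel (V (Suc m) k) (\<lambda>x. ennreal (beta_density (1 + (\<Sum>j\<in>{1..Suc m}. \<alpha> j) + l * real k) (\<alpha> (Suc (Suc m))) x))"
          using H sm by blast
        then show ?thesis by (rule distributed_beta_distr(1))
      qed
      have eqb: "1 + (\<Sum>j\<in>{1..Suc m}. \<alpha> j) + l * real k = (1-l) + b"
        unfolding b_def by (simp add: algebra_simps)
      have LY: "distr M borel (V (Suc m) k) = beta_measure (1-l+b) (\<alpha> (Suc (Suc m)))"
        using dV unfolding eqb .
      have R1: "distr M borel (\<lambda>\<omega>. (\<Prod>j\<in>{0..m}. V j k \<omega>) * V (Suc m) k \<omega>) = beta_measure (1-l) (b + \<alpha> (Suc (Suc m)))"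
        by (rule beta_prod_rv[OF iv _ b0 _ IH LY]) (use l pos in auto)
      have R2: "(\<lambda>\<omega>. (\<Prod>j\<in>{0..m}. V j k \<omega>) * V (Suc m) k \<omega>) = (\<lambda>\<omega>. \<Prod>j\<in>{0..Suc m}. V j k \<omega>)"
        by (simp add: prod.atLeast0_atMost_Suc)
      have R3: "b + \<alpha> (Suc (Suc m)) = (\<Sum>j\<in>{1..Suc (Suc m)}. \<alpha> j) + l * real (Suc k)"
        unfolding b_def by (simp add: sum.cl_ivl_Suc algebra_simps)
      show ?case using R1 unfolding R2 R3 .
    qed
    show "is_PD borel M (\<lambda>\<omega>. atomic_rm (stick_weights (\<lambda>k. S i k \<omega>)) (\<lambda>k. \<phi> k \<omega> i))
                         (\<Sum>m\<in>{1..r - i + 1}. \<alpha> m) l (distr G0 borel (\<lambda>y. y i))"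
    proof (rule key[OF i])
      fix k
      have "S i k = (\<lambda>\<omega>. \<Prod>j\<in>{0..r - i}. V j k \<omega>)" using H i by (auto simp: fun_eq_iff)
      moreover have "r - i \<le> r - 1" using i by auto
      ultimately show "distr M borel (S i k) = beta_measure (1-l) ((\<Sum>m\<in>{1..r - i + 1}. \<alpha> m) + l * real (Suc k))"
        using claim by simp
    qed
  qed
qed


end
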